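(* Let $G=(V=A\cup B,E,w)$ be a simple bipartite graph with weights $w\colon E\to\mathbb{R}_{\ge 0}$, let $b\colon V\to\mathbb{Z}_+$, and let $\varepsilon>0$. Let $F\subseteq E$ be a $b$-matching and let $p\colon B\to\mathbb{R}_{\ge 0}$ be prices such that (i) $F$ is $\varepsilon$-happy with respect to $p$, and (ii) every object $j\in B$ that is unsaturated by $F$ has $p(j)=0$. Then $w(F)\ge(1-\varepsilon)\,w(F^\ast)$, where $F^\ast$ is a $b$-matching of $G$ of maximum weight.
   Context: A $b$-matching is a set $F\subseteq E$ with $\deg_F(v)\le b(v)$ for all $v\in V$, where $\deg_F(v)$ is the number of edges of $F$ incident to $v$; $v$ is saturated by $F$ if $\deg_F(v)=b(v)$ and unsaturated if $\deg_F(v)<b(v)$. For $H\subseteq E$, $w(H)=\sum_{e\in H}w(e)$. Vertices of $A$ are called bidders and vertices of $B$ objects. $N(i)$ is the neighbor set of $i$ in $G$, and $F(i)$ is the set of objects matched to $i$ under $F$. Given prices $p\colon B\to\mathbb{R}_{\ge0}$, for a bidder $i\in A$ define $\pi(i)=\max\{\max_{k\in N(i)\setminus F(i)}\{(1-\varepsilon)w(i,k)-p(k)\},\,0\}$ (the inner max over an empty set is taken as $-\infty$). An edge $(i,j)\in F$ is $\varepsilon$-happy if $w(i,j)-p(j)\ge \pi(i)$. A bidder $i$ is $\varepsilon$-happy if all edges $(i,j)\in F$ are $\varepsilon$-happy and either $i$ is saturated by $F$ (and $\pi(i)\ge 0$), or $i$ is unsaturated by $F$ and $\pi(i)=0$.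 $F$ is $\varepsilon$-happy if every bidder $i\in A$ is $\varepsilon$-happy. *)

theory Defs
  imports Complex_Main
begin

(* Bipartite graph: bidders A, objects B (disjoint subsets of a vertex type 'v),
   edges E \<subseteq> A \<times> B written as pairs (i,j) with i a bidder and j an object. *)

definition deg :: "('v \<times> 'v) set \<Rightarrow> 'v \<Rightarrow> nat" where
  "deg F v = card {e \<in> F. fst e = v \<or> snd e = v}"

definition b_matching :: "'v set \<Rightarrow> 'v set \<Rightarrow> ('v \<times> 'v) set \<Rightarrow> ('v \<Rightarrow> nat) \<Rightarrow> ('v \<times> 'v) set \<Rightarrow> bool" where
  "b_matching A B E b F \<longleftrightarrow> F \<subseteq> E \<and> (\<forall>v \<in> A \<union> B. deg F v \<le> b v)"

definition wt :: "('v \<times> 'v \<Rightarrow> real) \<Rightarrow> ('v \<times> 'v) set \<Rightarrow> real" where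
  "wt w H = (\<Sum>e\<in>H. w e)"

definition max_weight_b_matching :: "'v set \<Rightarrow> 'v set \<Rightarrow> ('v \<times> 'v) set \<Rightarrow> ('v \<Rightarrow> nat) \<Rightarrow> ('v \<times> 'v \<Rightarrow> real) \<Rightarrow> ('v \<times> 'v) set \<Rightarrow> bool" where
  "max_weight_b_matching A B E b w F \<longleftrightarrow>
     b_matching A B E b F \<and> (\<forall>F'. b_matching A B E b F' \<longrightarrow> wt w F' \<le> wt w F)"

definition nbrs :: "('v \<times> 'v) set \<Rightarrow> 'v \<Rightarrow> 'v set" where
  "nbrs E i = {k. (i, k) \<in> E}"

(* pi(i) = max( max_{k in N(i) \ F(i)} ((1-eps) w(i,k) - p(k)), 0 ); the inner max over
   the empty set is -infinity, so then pi(i) = 0 *)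
definition util :: "('v \<times> 'v) set \<Rightarrow> ('v \<times> 'v \<Rightarrow> real) \<Rightarrow> real \<Rightarrow> ('v \<Rightarrow> real) \<Rightarrow> ('v \<times> 'v) set \<Rightarrow> 'v \<Rightarrow> real" where
  "util E w eps p F i =
     (let S = nbrs E i - nbrs F i in
      if S = {} then 0 else max (Max ((\<lambda>k. (1 - eps) * w (i, k) - p k) ` S)) 0)"

definition happy_edge :: "('v \<times> 'v) set \<Rightarrow> ('v \<times> 'v \<Rightarrow> real) \<Rightarrow> real \<Rightarrow> ('v \<Rightarrow> real) \<Rightarrow> ('v \<times> 'v) set \<Rightarrow> 'v \<Rightarrow> 'v \<Rightarrow> bool" where
  "happy_edge E w eps p F i j \<longleftrightarrow> w (i, j) - p j \<ge> util E w eps p F i"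

definition happy_bidder :: "('v \<times> 'v) set \<Rightarrow> ('v \<Rightarrow> nat) \<Rightarrow> ('v \<times> 'v \<Rightarrow> real) \<Rightarrow> real \<Rightarrow> ('v \<Rightarrow> real) \<Rightarrow> ('v \<times> 'v) set \<Rightarrow> 'v \<Rightarrow> bool" where
  "happy_bidder E b w eps p F i \<longleftrightarrow>
     (\<forall>j. (i, j) \<in> F \<longrightarrow> happy_edge E w eps p F i j) \<and>
     ((deg F i = b i \<and> util E w eps p F i \<ge> 0) \<or> (deg F i < b i \<and> util E w eps p F i = 0))"

definition happy :: "'v set \<Rightarrow> ('v \<times> 'v) set \<Rightarrow> ('v \<Rightarrow> nat) \<Rightarrow> ('v \<times> 'v \<Rightarrow> real) \<Rightarrow> real \<Rightarrow> ('v \<Rightarrow> real) \<Rightarrow> ('v \<times> 'v) set \<Rightarrow> bool" where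
  "happy A E b w eps p F \<longleftrightarrow> (\<forall>i \<in> A. happy_bidder E b w eps p F i)"

end

theory Submission
  imports Defs
begin

lemma group_fst:
  assumes "finite S" "S \<subseteq> A \<times> B" "A \<inter> B = {}" "finite A"
  shows "(\<Sum>e\<in>S. f (fst e)) = (\<Sum>i\<in>A. real (deg S i) * f i)"
proof -
  have "(\<Sum>e\<in>S. f (fst e)) = (\<Sum>i\<in>A. \<Sum>e\<in>{x\<in>S. fst x = i}. f (fst e))"
    using sum.group[of S A fst "\<lambda>e. f (fst e)"] assms by force
  also have "\<dots> = (\<Sum>i\<in>A. real (deg S i) * f i)"
  proof (rule sum.cong[OF refl])
    fix i assume i: "i \<in> A"
    have eq: "{x\<in>S. fst x = i} = {e \<in> S. fst e = i \<or> snd e = i}" using assms i by auto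
    have "(\<Sum>e\<in>{x\<in>S. fst x = i}. f (fst e)) = (\<Sum>e\<in>{x\<in>S. fst x = i}. f i)" by simp
    also have "\<dots> = real (card {x\<in>S. fst x = i}) * f i" by simp
    finally show "(\<Sum>e\<in>{x\<in>S. fst x = i}. f (fst e)) = real (deg S i) * f i"
      unfolding deg_def eq .
  qed
  finally show ?thesis .
qed

lemma group_snd:
  assumes "finite S" "S \<subseteq> A \<times> B" "A \<inter> B = {}" "finite B"
  shows "(\<Sum>e\<in>S. f (snd e)) = (\<Sum>j\<in>B. real (deg S j) * f j)"
proof -
  have "(\<Sum>e\<in>S. f (snd e)) = (\<Sum>j\<in>B. \<Sum>e\<in>{x\<in>S. snd x = j}. f (snd e))"
    using sum.group[of S B snd "\<lambda>e. f (snd e)"] assms by force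
  also have "\<dots> = (\<Sum>j\<in>B. real (deg S j) * f j)"
  proof (rule sum.cong[OF refl])
    fix i assume i: "i \<in> B"
    have eq: "{x\<in>S. snd x = i} = {e \<in> S. fst e = i \<or> snd e = i}" using assms i by auto
    have "(\<Sum>e\<in>{x\<in>S. snd x = i}. f (snd e)) = (\<Sum>e\<in>{x\<in>S. snd x = i}. f i)" by simp
    also have "\<dots> = real (card {x\<in>S. snd x = i}) * f i" by simp
    finally show "(\<Sum>e\<in>{x\<in>S. snd x = i}. f (snd e)) = real (deg S i) * f i"
      unfolding deg_def eq .
  qed
  finally show ?thesis .
qed

lemma deg_split:
  assumes "finite F"
  shows "deg F v = deg (F - G) v + deg (F \<inter> G) v"
proof -
  have "{e \<in> F. fst e = v \<or> snd e = v} = {e \<in> F - G. fst e = v \<or> snd e = v} \<union> {e \<in> F \<inter> G. fst e = v \<or> snd e = v}"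
    by auto
  moreover have "finite {e \<in> F - G. fst e = v \<or> snd e = v}" "finite {e \<in> F \<inter> G. fst e = v \<or> snd e = v}"
    using assms by auto
  ultimately show ?thesis unfolding deg_def
    by (subst card_Un_disjoint[symmetric]) auto
qed

lemma util_nonneg: "util E w eps p F i \<ge> 0"
  unfolding util_def Let_def by auto

lemma util_ge:
  assumes "(i,k) \<in> E" "(i,k) \<notin> F" "finite (nbrs E i)"
  shows "(1 - eps) * w (i, k) - p k \<le> util E w eps p F i"
proof -
  let ?S = "nbrs E i - nbrs F i"
  have k: "k \<in> ?S" using assms by (auto simp: nbrs_def)
  have "finite ?S" using assms by auto
  hence "(1 - eps) * w (i, k) - p k \<le> Max ((\<lambda>k. (1 - eps) * w (i, k) - p k) ` ?S)"
    using k by (intro Max_ge) auto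
  thus ?thesis using k unfolding util_def Let_def by auto
qed


theorem lemma2:
  fixes A B :: "'v set" and E :: "('v \<times> 'v) set" and w :: "'v \<times> 'v \<Rightarrow> real"
    and b :: "'v \<Rightarrow> nat" and eps :: real and p :: "'v \<Rightarrow> real"
    and F Fstar :: "('v \<times> 'v) set"
  assumes "finite A" and "finite B" and "A \<inter> B = {}" and "E \<subseteq> A \<times> B"
    and "\<forall>e \<in> E. w e \<ge> 0"
    and "\<forall>v \<in> A \<union> B. b v \<ge> 1"
    and "eps > 0"
    and "\<forall>j \<in> B. p j \<ge> 0"
    and "b_matching A B E b F"
    and "happy A E b w eps p F"
    and "\<forall>j \<in> B. deg F j < b j \<longrightarrow> p j = 0"
    and "max_weight_b_matching A B E b w Fstar"
  shows "wt w F \<ge> (1 - eps) * wt w Fstar"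
proof -
  note a = assms
  define pi where "pi = util E w eps p F"
  define D where "D = F - Fstar"
  define Ds where "Ds = Fstar - F"
  define C where "C = F \<inter> Fstar"
  have finE: "finite E" by (rule finite_subset[OF a(4)]) (simp add: a(1,2))
  have FE: "F \<subseteq> E" and FsE: "Fstar \<subseteq> E"
    using a(9,12) unfolding b_matching_def max_weight_b_matching_def by auto
  have finF: "finite F" "finite Fstar" using FE FsE finE finite_subset by auto
  have DAB: "D \<subseteq> A \<times> B" "Ds \<subseteq> A \<times> B" using FE FsE a(4) unfolding D_def Ds_def by auto
  have finD: "finite D" "finite Ds" "finite C" using finF unfolding D_def Ds_def C_def by auto
  have degF: "\<forall>v \<in> A \<union> B. deg F v \<le> b v" using a(9) unfolding b_matching_def by auto
  have degFs: "\<forall>v \<in> A \<union> B. deg Fstar v \<le> b v"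
    using a(12) unfolding b_matching_def max_weight_b_matching_def by auto
  have splitF: "deg F v = deg D v + deg C v" for v
    using deg_split[OF finF(1)] unfolding D_def C_def by auto
  have splitFs: "deg Fstar v = deg Ds v + deg C v" for v
    using deg_split[OF finF(2), where G=F] unfolding Ds_def C_def by (auto simp: Int_commute)
  have hb: "\<And>i. i \<in> A \<Longrightarrow> happy_bidder E b w eps p F i" using a(10) unfolding happy_def by auto
  have pi0: "pi i \<ge> 0" for i unfolding pi_def by (rule util_nonneg)
  have e1: "(\<Sum>e\<in>D. pi (fst e) + p (snd e)) \<le> wt w D"
    unfolding wt_def
  proof (rule sum_mono)
    fix e assume e: "e \<in> D"
    then obtain i j where ij: "e = (i,j)" "(i,j) \<in> F" "i \<in> A" using DAB unfolding D_def by auto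
    have "happy_edge E w eps p F i j" using hb[OF ij(3)] ij(2) unfolding happy_bidder_def by auto
    thus "pi (fst e) + p (snd e) \<le> w e" using ij unfolding happy_edge_def pi_def by auto
  qed
  have e2: "(\<Sum>e\<in>Ds. (1 - eps) * w e) \<le> (\<Sum>e\<in>Ds. pi (fst e) + p (snd e))"
  proof (rule sum_mono)
    fix e assume e: "e \<in> Ds"
    then obtain i j where ij: "e = (i,j)" "(i,j) \<in> E" "(i,j) \<notin> F" "i \<in> A"
    proof -
      obtain i j where "e = (i,j)" by (cases e)
      moreover have "e \<in> E" "e \<notin> F" "e \<in> A \<times> B" using e DAB(2) FsE unfolding Ds_def by auto
      ultimately show ?thesis using that by auto
    qed
    have "nbrs E i \<subseteq> B" using a(4) unfolding nbrs_def by auto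
    hence "finite (nbrs E i)" using a(2) finite_subset by auto
    from util_ge[OF ij(2,3) this, of eps w p]
    show "(1 - eps) * w e \<le> pi (fst e) + p (snd e)" using ij unfolding pi_def by auto
  qed
  have vA: "real (deg Ds i) * pi i \<le> real (deg D i) * pi i" if i: "i \<in> A" for i
  proof (cases "pi i = 0")
    case True thus ?thesis by simp
  next
    case False
    hence "deg F i = b i" using hb[OF i] pi0[of i] unfolding happy_bidder_def pi_def by auto
    moreover have "deg Fstar i \<le> b i" using degFs i by auto
    ultimately have "deg Ds i \<le> deg D i" using splitF[of i] splitFs[of i] by linarith
    thus ?thesis using pi0[of i] by (simp add: mult_right_mono)
  qed
  have vB: "real (deg Ds j) * p j \<le> real (deg D j) * p j" if j: "j \<in> B" for j
  proof (cases "p j = 0")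
    case True thus ?thesis by simp
  next
    case False
    hence "deg F j \<ge> b j" using a(11) j by force
    moreover have "deg Fstar j \<le> b j" using degFs j by auto
    ultimately have "deg Ds j \<le> deg D j" using splitF[of j] splitFs[of j] by linarith
    thus ?thesis using a(8) j by (simp add: mult_right_mono)
  qed
  have "(\<Sum>e\<in>Ds. pi (fst e) + p (snd e)) = (\<Sum>i\<in>A. real (deg Ds i) * pi i) + (\<Sum>j\<in>B. real (deg Ds j) * p j)"
    using group_fst[OF finD(2) DAB(2) a(3) a(1)] group_snd[OF finD(2) DAB(2) a(3) a(2)]
    by (simp add: sum.distrib)
  also have "\<dots> \<le> (\<Sum>i\<in>A. real (deg D i) * pi i) + (\<Sum>j\<in>B. real (deg D j) * p j)"
    using vA vB by (intro add_mono sum_mono) auto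
  also have "\<dots> = (\<Sum>e\<in>D. pi (fst e) + p (snd e))"
    using group_fst[OF finD(1) DAB(1) a(3) a(1)] group_snd[OF finD(1) DAB(1) a(3) a(2)]
    by (simp add: sum.distrib)
  finally have main: "(1 - eps) * wt w Ds \<le> wt w D"
    using e1 e2 unfolding wt_def by (simp add: sum_distrib_left)
  have Cw: "(1 - eps) * wt w C \<le> wt w C"
  proof -
    have "wt w C \<ge> 0" unfolding wt_def using a(5) FE unfolding C_def by (intro sum_nonneg) auto
    thus ?thesis using a(7) by (simp add: mult_le_cancel_right1 algebra_simps)
  qed
  have "F = D \<union> C" "D \<inter> C = {}" "Fstar = Ds \<union> C" "Ds \<inter> C = {}"
    unfolding D_def C_def Ds_def by auto
  hence "wt w F = wt w D + wt w C" "wt w Fstar = wt w Ds + wt w C"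
    unfolding wt_def using finD by (metis sum.union_disjoint)+
  thus ?thesis using main Cw by (simp add: algebra_simps)
qed

end
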